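(* Let $n\ge1$, let $\alpha=(\alpha_1,\dots,\alpha_\ell)$ be a composition of $n$, and let $V_\alpha=\{\gamma\vDash n : S_\alpha\in U_\gamma\}$ be the set of compositions $\gamma$ of $n$ for which $S_\alpha$ is $\gamma$-unimodal. Then $$|V_\alpha| = 2^{n-1}\left(\tfrac34\right)^m,$$ where $m$ is the number of indices $i\in[\ell-1]$ with $\alpha_i>1$.
   Context: A composition $\alpha=(\alpha_1,\dots,\alpha_\ell)$ of $n$ (written $\alpha\vDash n$) is a sequence of positive integers summing to $n$; $\ell=\ell(\alpha)$ is its number of parts. Set $S_\alpha=\{\alpha_1,\alpha_1+\alpha_2,\dots,\alpha_1+\dots+\alpha_{\ell-1}\}\subseteq[n-1]$. The blocks of $\alpha$ are $B_i(\alpha)=\{\alpha_1+\dots+\alpha_{i-1}+1,\dots,\alpha_1+\dots+\alpha_i\}$ for $i\in[\ell]$. A set $S\subseteq[n-1]$ is $\gamma$-unimodal (for a composition $\gamma$ of $n$) if for every block $B_i(\gamma)$ the set $S\cap(B_i(\gamma)\setminus S_\gamma)$ is an initial segment (in increasing order) of $B_i(\gamma)\setminus S_\gamma$; equivalently, $S$ is the descent set of a permutation whose restriction to each block of $\gamma$ is a word $\sigma_a>\dots>\sigma_k<\dots<\sigma_b$. $U_\gamma$ denotes the set of $\gamma$-unimodal subsets of $[n-1]$. *)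

theory Defs
  imports Complex_Main
begin

definition is_comp :: "nat \<Rightarrow> nat list \<Rightarrow> bool" where
  "is_comp n \<alpha> \<longleftrightarrow> (\<forall>a\<in>set \<alpha>. 0 < a) \<and> sum_list \<alpha> = n"

definition comp_set :: "nat list \<Rightarrow> nat set" where
  "comp_set \<alpha> = {sum_list (take i \<alpha>) | i. 1 \<le> i \<and> i < length \<alpha>}"

text \<open>Block B_i (1-indexed, i in [l]).\<close>
definition block :: "nat list \<Rightarrow> nat \<Rightarrow> nat set" where
  "block \<gamma> i = {sum_list (take (i - 1) \<gamma>) + 1 .. sum_list (take i \<gamma>)}"

definition unimodal :: "nat \<Rightarrow> nat list \<Rightarrow> nat set \<Rightarrow> bool" where
  "unimodal n \<gamma> S \<longleftrightarrow> S \<subseteq> {1..n-1} \<and>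
     (\<forall>i\<in>{1..length \<gamma>}. \<forall>x\<in>S \<inter> (block \<gamma> i - comp_set \<gamma>).
        \<forall>y\<in>block \<gamma> i - comp_set \<gamma>. y < x \<longrightarrow> y \<in> S)"

definition U :: "nat \<Rightarrow> nat list \<Rightarrow> nat set set" where
  "U n \<gamma> = {S. unimodal n \<gamma> S}"

definition V :: "nat \<Rightarrow> nat list \<Rightarrow> nat list set" where
  "V n \<alpha> = {\<gamma>. is_comp n \<gamma> \<and> comp_set \<alpha> \<in> U n \<gamma>}"

end

theory Submission
  imports Defs
begin


lemma comp_set_Nil: "comp_set [] = {}" by (simp add: comp_set_def)

lemma mem_comp_set: "1 \<le> i \<Longrightarrow> i < length g \<Longrightarrow> sum_list (take i g) \<in> comp_set g"
  unfolding comp_set_def by blast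

lemma comp_set_Cons: "comp_set (a # g) = (if g = [] then {} else insert a ((+) a ` comp_set g))"
proof (cases "g = []")
  case True then show ?thesis by (simp add: comp_set_def)
next
  case False
  have "comp_set (a # g) = insert a ((+) a ` comp_set g)"
  proof (rule set_eqI, rule iffI)
    fix x assume "x \<in> comp_set (a # g)"
    then obtain i where i: "1 \<le> i" "i < Suc (length g)" "x = sum_list (take i (a#g))"
      unfolding comp_set_def by auto
    show "x \<in> insert a ((+) a ` comp_set g)"
    proof (cases i)
      case 0 then show ?thesis using i by simp
    next
      case (Suc j)
      show ?thesis
      proof (cases j)
        case 0 then show ?thesis using i Suc by simp
      next
        case (Suc k)
        then have "sum_list (take j g) \<in> comp_set g" using i \<open>i = Suc j\<close> by (intro mem_comp_set) auto
        moreover have "x = a + sum_list (take j g)" using i \<open>i = Suc j\<close> by simp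
        ultimately show ?thesis by blast
      qed
    qed
  next
    fix x assume "x \<in> insert a ((+) a ` comp_set g)"
    then consider "x = a" | j where "1 \<le> j" "j < length g" "x = a + sum_list (take j g)"
      unfolding comp_set_def by blast
    then show "x \<in> comp_set (a # g)"
    proof cases
      case 1
      have "sum_list (take 1 (a#g)) \<in> comp_set (a#g)" using False by (intro mem_comp_set) auto
      then show ?thesis using 1 by simp
    next
      case 2
      have "sum_list (take (Suc j) (a#g)) \<in> comp_set (a#g)" using 2 by (intro mem_comp_set) auto
      then show ?thesis using 2 by simp
    qed
  qed
  then show ?thesis using False by simp
qed

lemma is_comp_Nil: "is_comp n [] \<longleftrightarrow> n = 0" by (auto simp: is_comp_def)
lemma is_comp_Cons: "is_comp n (a # g) \<longleftrightarrow> 0 < a \<and> a \<le> n \<and> is_comp (n - a) g"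
  by (auto simp: is_comp_def)

lemma comp_set_bound: "is_comp n g \<Longrightarrow> comp_set g \<subseteq> {1..n-1}"
proof (induction g arbitrary: n)
  case Nil then show ?case by (simp add: comp_set_Nil)
next
  case (Cons a g)
  show ?case
  proof (cases "g = []")
    case True then show ?thesis by (simp add: comp_set_Cons)
  next
    case False
    have c: "0 < a" "a \<le> n" "is_comp (n - a) g" using Cons.prems by (auto simp: is_comp_Cons)
    have "n - a \<noteq> 0" using c(3) False by (cases g) (auto simp: is_comp_Cons)
    have h: "\<And>x. x \<in> comp_set g \<Longrightarrow> 1 \<le> x \<and> x \<le> n - a - 1" using Cons.IH[OF c(3)] by auto
    show ?thesis
    proof
      fix y assume "y \<in> comp_set (a # g)"
      then consider "y = a" | x where "x \<in> comp_set g" "y = a + x" using False by (auto simp: comp_set_Cons)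
      then show "y \<in> {1..n-1}"
      proof cases
        case 1 then show ?thesis using c \<open>n - a \<noteq> 0\<close> by auto
      next
        case 2 then show ?thesis using h[OF 2(1)] c by auto
      qed
    qed
  qed
qed

lemma comp_set_inj: "is_comp n g \<Longrightarrow> is_comp n d \<Longrightarrow> comp_set g = comp_set d \<Longrightarrow> g = d"
proof (induction g arbitrary: n d)
  case Nil then show ?case by (cases d) (auto simp: is_comp_Nil is_comp_Cons)
next
  case (Cons a g)
  obtain b d' where d: "d = b # d'" using Cons.prems by (cases d) (auto simp: is_comp_Nil is_comp_Cons)
  have ca: "0 < a" "a \<le> n" "is_comp (n - a) g" using Cons.prems by (auto simp: is_comp_Cons)
  have cb: "0 < b" "b \<le> n" "is_comp (n - b) d'" using Cons.prems d by (auto simp: is_comp_Cons)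
  have pos: "\<And>h m. is_comp m h \<Longrightarrow> \<forall>t\<in>comp_set h. 1 \<le> t" using comp_set_bound by fastforce
  show ?case
  proof (cases "g = []")
    case True
    then have "a = n" using ca by (simp add: is_comp_Nil)
    have "d' = []" using Cons.prems(3) True d by (auto simp: comp_set_Cons split: if_splits)
    then show ?thesis using True d cb \<open>a = n\<close> by (simp add: is_comp_Nil)
  next
    case False
    have "d' \<noteq> []" using Cons.prems(3) False d by (auto simp: comp_set_Cons split: if_splits)
    have eq: "insert a ((+) a ` comp_set g) = insert b ((+) b ` comp_set d')"
      using Cons.prems(3) False \<open>d' \<noteq> []\<close> d by (simp add: comp_set_Cons)
    have "a = b"
    proof (rule ccontr)
      assume "a \<noteq> b"
      have b1: "b \<in> insert a ((+) a ` comp_set g)" by (subst eq) simp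
      have "a \<in> insert b ((+) b ` comp_set d')" by (subst eq[symmetric]) simp
      then have "a \<in> (+) b ` comp_set d'" "b \<in> (+) a ` comp_set g" using b1 \<open>a \<noteq> b\<close> by auto
      then show False using pos[OF ca(3)] pos[OF cb(3)] by force
    qed
    have "(+) a ` comp_set g = (+) a ` comp_set d'"
    proof -
      have "a \<notin> (+) a ` comp_set g" "a \<notin> (+) a ` comp_set d'" using pos[OF ca(3)] pos[OF cb(3)] by force+
      then show ?thesis using eq \<open>a = b\<close> by (metis insert_ident)
    qed
    then have "comp_set g = comp_set d'" by (simp add: inj_image_eq_iff)
    then have "g = d'" using Cons.IH[OF ca(3)] cb(3) \<open>a = b\<close> by simp
    then show ?thesis using d \<open>a = b\<close> by simp
  qed
qed

lemma comp_set_surj: "1 \<le> n \<Longrightarrow> T \<subseteq> {1..n-1} \<Longrightarrow> \<exists>g. is_comp n g \<and> comp_set g = T"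
proof (induction n arbitrary: T rule: less_induct)
  case (less n)
  show ?case
  proof (cases "T = {}")
    case True
    then show ?thesis using less.prems by (intro exI[of _ "[n]"]) (simp add: is_comp_def comp_set_Nil comp_set_Cons)
  next
    case False
    have fin: "finite T" using less.prems finite_subset by blast
    define a where "a = Min T"
    have aT: "a \<in> T" using fin False a_def by simp
    have amin: "\<And>t. t \<in> T \<Longrightarrow> a \<le> t" using fin a_def by simp
    have "1 \<le> a" "a \<le> n - 1" using aT less.prems(2) by auto
    then have a1: "1 \<le> a" "a < n" using less.prems(1) by linarith+
    define T' where "T' = (\<lambda>x. x - a) ` (T - {a})"
    have T'sub: "T' \<subseteq> {1..(n-a)-1}"
    proof
      fix y assume "y \<in> T'"
      then obtain t where "t \<in> T" "t \<noteq> a" "y = t - a" unfolding T'_def by auto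
      then show "y \<in> {1..(n-a)-1}" using amin[of t] less.prems by auto
    qed
    have "n - a < n" "1 \<le> n - a" using a1 by auto
    then obtain g where g: "is_comp (n - a) g" "comp_set g = T'"
      using less.IH[of "n - a" T'] T'sub by blast
    have "g \<noteq> []" using g a1 by (auto simp: is_comp_Nil)
    have "(+) a ` T' = T - {a}"
    proof -
      have "(+) a ` T' = (\<lambda>t. a + (t - a)) ` (T - {a})" unfolding T'_def by (simp add: image_image)
      also have "\<dots> = T - {a}"
      proof -
        have "(\<lambda>t. a + (t - a)) ` (T - {a}) = (\<lambda>t. t) ` (T - {a})"
          using amin by (intro image_cong) auto
        then show ?thesis by simp
      qed
      finally show ?thesis .
    qed
    then have "comp_set (a # g) = T" using \<open>g \<noteq> []\<close> g aT by (auto simp: comp_set_Cons)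
    moreover have "is_comp n (a # g)" using g a1 by (simp add: is_comp_Cons)
    ultimately show ?thesis by blast
  qed
qed


lemma block_Cons1: "block (a # g) 1 = {1..a}" by (simp add: block_def)

lemma block_Cons_Suc: "1 \<le> j \<Longrightarrow> block (a # g) (Suc j) = {a + sum_list (take (j - 1) g) + 1 .. a + sum_list (take j g)}"
  by (simp add: block_def take_Cons')

lemma block_shift: "1 \<le> j \<Longrightarrow> a < x \<Longrightarrow> x \<in> block (a # g) (Suc j) \<longleftrightarrow> x - a \<in> block g j"
proof -
  assume j: "1 \<le> j" and x: "a < x"
  have e: "block (a#g) (Suc j) = {a + sum_list (take (j - 1) g) + 1 .. a + sum_list (take j g)}"
    using j by (rule block_Cons_Suc)
  have "block g j = {sum_list (take (j - 1) g) + 1 .. sum_list (take j g)}" by (simp add: block_def)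
  then show ?thesis unfolding e using x by auto
qed

lemma block_gt: "1 \<le> j \<Longrightarrow> z \<in> block (a # g) (Suc j) \<Longrightarrow> a < z"
  by (auto simp: block_Cons_Suc)

lemma same_block:
  "is_comp n g \<Longrightarrow> 1 \<le> y \<Longrightarrow> y < x \<Longrightarrow> x \<le> n \<Longrightarrow>
   (\<exists>i\<in>{1..length g}. x \<in> block g i \<and> y \<in> block g i) \<longleftrightarrow> (\<forall>t\<in>comp_set g. t < y \<or> x \<le> t)"
proof (induction g arbitrary: n x y)
  case Nil then show ?case by (simp add: is_comp_Nil)
next
  case (Cons a g)
  have c: "0 < a" "a \<le> n" "is_comp (n - a) g" using Cons.prems by (auto simp: is_comp_Cons)
  show ?case
  proof (cases "g = []")
    case True
    then have "a = n" using c by (simp add: is_comp_Nil)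
    then show ?thesis using True Cons.prems by (simp add: comp_set_Cons block_def)
  next
    case False
    have pos: "\<forall>t\<in>comp_set g. 1 \<le> t" using comp_set_bound[OF c(3)] by auto
    have CS: "comp_set (a # g) = insert a ((+) a ` comp_set g)" using False by (simp add: comp_set_Cons)
    consider "x \<le> a" | "y \<le> a" "a < x" | "a < y" using Cons.prems by linarith
    then show ?thesis
    proof cases
      case 1
      have "x \<in> block (a#g) 1 \<and> y \<in> block (a#g) 1" using 1 Cons.prems by (simp add: block_def)
      then have L: "\<exists>i\<in>{1..length (a#g)}. x \<in> block (a#g) i \<and> y \<in> block (a#g) i" by force
      have "\<forall>t\<in>comp_set (a#g). t < y \<or> x \<le> t" using 1 unfolding CS by auto
      then show ?thesis using L by blast
    next
      case 2
      have "\<not> (x \<in> block (a#g) i \<and> y \<in> block (a#g) i)" if "i \<in> {1..length (a#g)}" for i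
      proof (cases i)
        case 0 then show ?thesis using that by simp
      next
        case (Suc j)
        show ?thesis
        proof (cases "j = 0")
          case True then show ?thesis using Suc 2 by (simp add: block_def)
        next
          case False
          then show ?thesis using Suc 2 block_gt[of j y a g] by auto
        qed
      qed
      moreover have "\<not> (\<forall>t\<in>comp_set (a#g). t < y \<or> x \<le> t)" using 2 unfolding CS by auto
      ultimately show ?thesis by blast
    next
      case 3
      have L: "(\<exists>i\<in>{1..length (a#g)}. x \<in> block (a#g) i \<and> y \<in> block (a#g) i) \<longleftrightarrow>
               (\<exists>j\<in>{1..length g}. x - a \<in> block g j \<and> y - a \<in> block g j)"
      proof
        assume "\<exists>i\<in>{1..length (a#g)}. x \<in> block (a#g) i \<and> y \<in> block (a#g) i"
        then obtain i where i: "i \<in> {1..length (a#g)}" "x \<in> block (a#g) i" "y \<in> block (a#g) i" by blast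
        then obtain j where j: "i = Suc j" by (cases i) auto
        have "j \<noteq> 0"
        proof
          assume "j = 0"
          then have "x \<in> block (a#g) (Suc 0)" using i j by simp
          then show False using 3 Cons.prems by (simp add: block_def)
        qed
        then have "x - a \<in> block g j \<and> y - a \<in> block g j" using i j 3 Cons.prems block_shift[of j a x g] block_shift[of j a y g] by auto
        then show "\<exists>j\<in>{1..length g}. x - a \<in> block g j \<and> y - a \<in> block g j" using i j \<open>j \<noteq> 0\<close> by auto
      next
        assume "\<exists>j\<in>{1..length g}. x - a \<in> block g j \<and> y - a \<in> block g j"
        then obtain j where j: "j \<in> {1..length g}" "x - a \<in> block g j" "y - a \<in> block g j" by blast
        then have "x \<in> block (a#g) (Suc j) \<and> y \<in> block (a#g) (Suc j)" using 3 Cons.prems block_shift[of j a x g] block_shift[of j a y g] by auto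
        then show "\<exists>i\<in>{1..length (a#g)}. x \<in> block (a#g) i \<and> y \<in> block (a#g) i" using j
          by (intro bexI[of _ "Suc j"]) auto
      qed
      have IH: "(\<exists>j\<in>{1..length g}. x - a \<in> block g j \<and> y - a \<in> block g j) \<longleftrightarrow>
                (\<forall>t\<in>comp_set g. t < y - a \<or> x - a \<le> t)"
        using Cons.IH[OF c(3), of "y - a" "x - a"] 3 Cons.prems by auto
      have R: "(\<forall>t\<in>comp_set (a#g). t < y \<or> x \<le> t) \<longleftrightarrow> (\<forall>t\<in>comp_set g. t < y - a \<or> x - a \<le> t)"
        unfolding CS using 3 Cons.prems by auto
      show ?thesis using L IH R by simp
    qed
  qed
qed

definition Q :: "nat set \<Rightarrow> nat set \<Rightarrow> bool" where
  "Q S T \<longleftrightarrow> (\<forall>x\<in>S. x \<notin> T \<longrightarrow> 2 \<le> x \<longrightarrow> x - 1 \<in> S \<or> x - 1 \<in> T)"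

lemma block_bound: "1 \<le> i \<Longrightarrow> z \<in> block g i \<Longrightarrow> 1 \<le> z"
  by (auto simp: block_def)

lemma unimodal_G:
  assumes g: "is_comp n g" and S: "S \<subseteq> {1..n-1}"
  shows "unimodal n g S \<longleftrightarrow>
    (\<forall>x\<in>S - comp_set g. \<forall>y. 1 \<le> y \<longrightarrow> y < x \<longrightarrow> (\<forall>t\<in>comp_set g. t < y \<or> x \<le> t) \<longrightarrow> y \<in> S)"
    (is "_ \<longleftrightarrow> ?G")
proof
  assume u: "unimodal n g S"
  show ?G
  proof (intro ballI allI impI)
    fix x y assume x: "x \<in> S - comp_set g" and y: "1 \<le> y" "y < x" and tf: "\<forall>t\<in>comp_set g. t < y \<or> x \<le> t"
    have "x \<le> n - 1" using x subsetD[OF S] by auto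
    then have "x \<le> n" by linarith
    then obtain i where i: "i \<in> {1..length g}" "x \<in> block g i" "y \<in> block g i"
      using same_block[OF g y \<open>x \<le> n\<close>] tf by blast
    have "y \<notin> comp_set g" using tf y by auto
    then show "y \<in> S" using u i x y unfolding unimodal_def by blast
  qed
next
  assume G: ?G
  show "unimodal n g S" unfolding unimodal_def
  proof (intro conjI S ballI impI)
    fix i x y assume i: "i \<in> {1..length g}" and x: "x \<in> S \<inter> (block g i - comp_set g)"
      and y: "y \<in> block g i - comp_set g" and yx: "y < x"
    have "1 \<le> y" using block_bound y i by auto
    have "x \<le> n - 1" using x subsetD[OF S] by auto
    then have "x \<le> n" by linarith
    have "\<forall>t\<in>comp_set g. t < y \<or> x \<le> t"
      using same_block[OF g \<open>1 \<le> y\<close> yx \<open>x \<le> n\<close>] i x y by blast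
    then show "y \<in> S" using G x \<open>1 \<le> y\<close> yx by blast
  qed
qed

lemma G_Q:
  "(\<forall>x\<in>S - T. \<forall>y. 1 \<le> y \<longrightarrow> y < x \<longrightarrow> (\<forall>t\<in>T. t < y \<or> x \<le> t) \<longrightarrow> y \<in> S) \<longleftrightarrow> Q S T"
proof
  assume G: "\<forall>x\<in>S - T. \<forall>y. 1 \<le> y \<longrightarrow> y < x \<longrightarrow> (\<forall>t\<in>T. t < y \<or> x \<le> t) \<longrightarrow> y \<in> S"
  show "Q S T" unfolding Q_def
  proof (intro ballI impI)
    fix x assume x: "x \<in> S" "x \<notin> T" "2 \<le> x"
    show "x - 1 \<in> S \<or> x - 1 \<in> T"
    proof (cases "x - 1 \<in> T")
      case False
      have "\<forall>t\<in>T. t < x - 1 \<or> x \<le> t"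
      proof
        fix t assume "t \<in> T"
        then have "t \<noteq> x - 1" using False by auto
        then show "t < x - 1 \<or> x \<le> t" by linarith
      qed
      then show ?thesis using G x by auto
    qed simp
  qed
next
  assume q: "Q S T"
  show "\<forall>x\<in>S - T. \<forall>y. 1 \<le> y \<longrightarrow> y < x \<longrightarrow> (\<forall>t\<in>T. t < y \<or> x \<le> t) \<longrightarrow> y \<in> S"
  proof (intro ballI allI impI)
    fix x y assume x: "x \<in> S - T"
    show "1 \<le> y \<Longrightarrow> y < x \<Longrightarrow> \<forall>t\<in>T. t < y \<or> x \<le> t \<Longrightarrow> y \<in> S"
    proof (induction "x - y" arbitrary: y rule: less_induct)
      case less
      show ?case
      proof (cases "y = x - 1")
        case True
        have "y \<notin> T" using less.prems by auto
        moreover have "2 \<le> x" using less.prems by auto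
        ultimately show ?thesis using q x True unfolding Q_def by auto
      next
        case False
        have a1: "x - (y + 1) < x - y" "y + 1 < x" using less.prems False by auto
        have a2: "\<forall>t\<in>T. t < y + 1 \<or> x \<le> t" using less.prems(3) by auto
        have "y + 1 \<in> S" using less.hyps[OF a1(1) _ a1(2) a2] by simp
        moreover have "y + 1 \<notin> T" using less.prems False by auto
        ultimately have "y \<in> S \<or> y \<in> T" using q less.prems unfolding Q_def by fastforce
        moreover have "y \<notin> T" using less.prems by auto
        ultimately show ?thesis by blast
      qed
    qed
  qed
qed


definition Pset :: "nat set \<Rightarrow> nat set" where
  "Pset S = {x\<in>S. 2 \<le> x \<and> x - 1 \<notin> S}"

definition Iset :: "nat list \<Rightarrow> nat set" where
  "Iset al = {i \<in> {1..length al - 1}. al ! (i - 1) > 1}"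

lemma finite_Iset: "finite (Iset al)" unfolding Iset_def by simp

lemma Iset_Cons: "g \<noteq> [] \<Longrightarrow> Iset (a # g) = (if 1 < a then {1} else {}) \<union> Suc ` Iset g"
proof (rule set_eqI)
  fix i assume g: "g \<noteq> []"
  show "i \<in> Iset (a # g) \<longleftrightarrow> i \<in> (if 1 < a then {1} else {}) \<union> Suc ` Iset g"
  proof (cases i)
    case 0 then show ?thesis by (auto simp: Iset_def)
  next
    case (Suc j)
    show ?thesis
    proof (cases j)
      case 0
      have "1 \<le> length g" using g by (cases g) auto
      then show ?thesis using 0 Suc g by (auto simp: Iset_def)
    next
      case (Suc k)
      then show ?thesis using \<open>i = Suc j\<close> g by (auto simp: Iset_def)
    qed
  qed
qed

lemma Pset_Cons:
  assumes c: "is_comp n (a # g)" and g: "g \<noteq> []"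
  shows "Pset (comp_set (a # g)) = (if 2 \<le> a then {a} else {}) \<union> (+) a ` Pset (comp_set g)"
proof -
  have ca: "0 < a" "is_comp (n - a) g" using c by (auto simp: is_comp_Cons)
  have pos: "\<And>t. t \<in> comp_set g \<Longrightarrow> 1 \<le> t" using comp_set_bound[OF ca(2)] by auto
  have CS: "comp_set (a # g) = insert a ((+) a ` comp_set g)" using g by (simp add: comp_set_Cons)
  show ?thesis
  proof (rule set_eqI)
    fix x
    show "x \<in> Pset (comp_set (a # g)) \<longleftrightarrow> x \<in> (if 2 \<le> a then {a} else {}) \<union> (+) a ` Pset (comp_set g)"
    proof (cases "x = a")
      case True
      have "a - 1 \<notin> comp_set (a # g)" unfolding CS using pos ca by force
      then show ?thesis using True pos unfolding Pset_def CS by force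
    next
      case False
      show ?thesis
      proof
        assume "x \<in> Pset (comp_set (a # g))"
        then have x: "x \<in> (+) a ` comp_set g" "x - 1 \<notin> insert a ((+) a ` comp_set g)"
          using False unfolding Pset_def CS by auto
        then obtain c where cc: "c \<in> comp_set g" "x = a + c" by auto
        have "c \<noteq> 1" using x(2) cc by auto
        then have "2 \<le> c" using pos[OF cc(1)] by simp
        moreover have "c - 1 \<notin> comp_set g"
        proof
          assume "c - 1 \<in> comp_set g"
          then have "a + (c - 1) \<in> (+) a ` comp_set g" by blast
          moreover have "a + (c - 1) = x - 1" using cc \<open>2 \<le> c\<close> by simp
          ultimately show False using x(2) by simp
        qed
        ultimately show "x \<in> (if 2 \<le> a then {a} else {}) \<union> (+) a ` Pset (comp_set g)"
          using cc unfolding Pset_def by auto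
      next
        assume "x \<in> (if 2 \<le> a then {a} else {}) \<union> (+) a ` Pset (comp_set g)"
        then obtain c where cc: "c \<in> comp_set g" "2 \<le> c" "c - 1 \<notin> comp_set g" "x = a + c"
          using False unfolding Pset_def by (auto split: if_splits)
        have "x - 1 \<noteq> a" using cc by simp
        moreover have "x - 1 \<notin> (+) a ` comp_set g"
        proof
          assume "x - 1 \<in> (+) a ` comp_set g"
          then obtain e where "e \<in> comp_set g" "x - 1 = a + e" by auto
          then have "e = c - 1" using cc by simp
          then show False using \<open>e \<in> comp_set g\<close> cc by simp
        qed
        ultimately show "x \<in> Pset (comp_set (a # g))" using cc unfolding Pset_def CS by auto
      qed
    qed
  qed
qed

lemma card_Pset: "is_comp n al \<Longrightarrow> card (Pset (comp_set al)) = card (Iset al)"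
proof (induction al arbitrary: n)
  case Nil then show ?case by (simp add: comp_set_Nil Pset_def Iset_def)
next
  case (Cons a g)
  have ca: "0 < a" "is_comp (n - a) g" using Cons.prems by (auto simp: is_comp_Cons)
  show ?case
  proof (cases "g = []")
    case True then show ?thesis by (simp add: comp_set_Cons Pset_def Iset_def)
  next
    case False
    have pos: "\<And>t. t \<in> Pset (comp_set g) \<Longrightarrow> 1 \<le> t" using comp_set_bound[OF ca(2)] unfolding Pset_def by auto
    have "finite (comp_set g)" using comp_set_bound[OF ca(2)] by (rule finite_subset) simp
    moreover have "Pset (comp_set g) \<subseteq> comp_set g" by (auto simp: Pset_def)
    ultimately have finP: "finite (Pset (comp_set g))" using finite_subset by blast
    have d1: "(if 2 \<le> a then {a} else {}) \<inter> (+) a ` Pset (comp_set g) = {}" using pos by force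
    have d2: "(if 1 < a then {1} else {}) \<inter> Suc ` Iset g = {}" unfolding Iset_def by auto
    have "card (Pset (comp_set (a # g))) = card (if 2 \<le> a then {a} else ({}::nat set)) + card (Pset (comp_set g))"
      unfolding Pset_Cons[OF Cons.prems False]
      by (subst card_Un_disjoint[OF _ _ d1]) (auto simp: finP card_image)
    moreover have "card (Iset (a # g)) = card (if 1 < a then {1} else ({}::nat set)) + card (Iset g)"
      unfolding Iset_Cons[OF False]
      by (subst card_Un_disjoint[OF _ _ d2]) (auto simp: finite_Iset card_image)
    moreover have "card (Pset (comp_set g)) = card (Iset g)" using Cons.IH[OF ca(2)] .
    ultimately show ?thesis by simp
  qed
qed



lemma count_pairs:
  fixes P :: "nat set"
  assumes "finite P"
  shows "finite X \<Longrightarrow> (\<forall>x\<in>P. 1 \<le> x \<and> x \<in> X \<and> x - 1 \<in> X \<and> x - 1 \<notin> P) \<Longrightarrow>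
    card {T. T \<subseteq> X \<and> (\<forall>x\<in>P. x \<in> T \<or> x - 1 \<in> T)} * 4 ^ card P = 2 ^ card X * 3 ^ card P"
  using assms
proof (induction P arbitrary: X rule: finite_induct)
  case empty
  have "{T. T \<subseteq> X} = Pow X" by auto
  then show ?case using empty by (simp add: card_Pow)
next
  case (insert p P)
  define D where "D = {p - 1, p}"
  define X' where "X' = X - D"
  have hp: "1 \<le> p" "p \<in> X" "p - 1 \<in> X" "p - 1 \<notin> insert p P" using insert.prems by auto
  have Dsub: "D \<subseteq> X" using hp D_def by auto
  have cD: "card D = 2" using hp D_def by auto
  have finD: "finite D" using D_def by simp
  have cU': "card X' = card X - 2" unfolding X'_def using card_Diff_subset[OF finD Dsub] cD by simp
  have cU2: "2 \<le> card X" using card_mono[OF insert.prems(1) Dsub] cD by simp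
  have Pc: "\<forall>x\<in>P. 1 \<le> x \<and> x \<in> X' \<and> x - 1 \<in> X' \<and> x - 1 \<notin> P"
  proof
    fix x assume x: "x \<in> P"
    have h: "1 \<le> x" "x \<in> X" "x - 1 \<in> X" "x - 1 \<notin> insert p P" using insert.prems x by auto
    have "x \<noteq> p" using x insert.hyps by auto
    then show "1 \<le> x \<and> x \<in> X' \<and> x - 1 \<in> X' \<and> x - 1 \<notin> P"
      using h hp x unfolding X'_def D_def by auto
  qed
  have finU': "finite X'" using insert.prems X'_def by simp
  define A where "A = {T. T \<subseteq> X \<and> (\<forall>x\<in>insert p P. x \<in> T \<or> x - 1 \<in> T)}"
  define B where "B = {T. T \<subseteq> X' \<and> (\<forall>x\<in>P. x \<in> T \<or> x - 1 \<in> T)}"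
  define C where "C = Pow D - {{}}"
  have IH: "card B * 4 ^ card P = 2 ^ card X' * 3 ^ card P"
    using insert.IH[OF finU' Pc] unfolding B_def .
  have cC: "card C = 3"
  proof -
    have "card (Pow D) = 4" using cD finD by (simp add: card_Pow)
    then show ?thesis unfolding C_def by (simp add: card_Diff_singleton finD)
  qed
  have finB: "finite B" unfolding B_def using finU' by (auto intro: finite_subset[of _ "Pow X'"])
  have finC: "finite C" unfolding C_def using finD by simp
  have PD: "\<And>x. x \<in> P \<Longrightarrow> x \<notin> D \<and> x - 1 \<notin> D" using Pc X'_def by auto
  have inj: "inj_on (\<lambda>(T, E). T \<union> E) (B \<times> C)"
  proof (rule inj_onI, clarify)
    fix T E T2 E2 assume a: "T \<in> B" "E \<in> C" "T2 \<in> B" "E2 \<in> C" "T \<union> E = T2 \<union> E2"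
    have "T \<inter> D = {}" "T2 \<inter> D = {}" "E \<subseteq> D" "E2 \<subseteq> D" using a unfolding B_def C_def X'_def by auto
    then have "T = (T \<union> E) - D" "T2 = (T2 \<union> E2) - D" "E = (T \<union> E) \<inter> D" "E2 = (T2 \<union> E2) \<inter> D" by blast+
    then show "T = T2 \<and> E = E2" using a(5) by metis
  qed
  have img: "(\<lambda>(T, E). T \<union> E) ` (B \<times> C) = A"
  proof
    show "(\<lambda>(T, E). T \<union> E) ` (B \<times> C) \<subseteq> A"
    proof clarify
      fix T E assume a: "T \<in> B" "E \<in> C"
      have "E \<subseteq> D" "E \<noteq> {}" using a unfolding C_def by auto
      then have "p \<in> E \<or> p - 1 \<in> E" unfolding D_def by auto
      then show "T \<union> E \<in> A" using a Dsub unfolding A_def B_def C_def X'_def by auto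
    qed
  next
    show "A \<subseteq> (\<lambda>(T, E). T \<union> E) ` (B \<times> C)"
    proof
      fix T assume T: "T \<in> A"
      have "T - D \<in> B"
      proof -
        have "\<forall>x\<in>P. x \<in> T - D \<or> x - 1 \<in> T - D" using T PD unfolding A_def by auto
        then show ?thesis using T unfolding A_def B_def X'_def by auto
      qed
      moreover have "T \<inter> D \<in> C" using T unfolding A_def C_def D_def by auto
      moreover have "T = (\<lambda>(T, E). T \<union> E) (T - D, T \<inter> D)" by auto
      ultimately show "T \<in> (\<lambda>(T, E). T \<union> E) ` (B \<times> C)" by blast
    qed
  qed
  have cA: "card A = card B * 3"
    using card_image[OF inj] img card_cartesian_product[of B C] cC by simp
  have "card A * 4 ^ card (insert p P) = (card B * 4 ^ card P) * 12" using insert.hyps cA by simp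
  also have "\<dots> = 2 ^ card X' * 4 * 3 ^ Suc (card P)" using IH by simp
  also have "2 ^ card X' * (4::nat) = 2 ^ card X"
  proof -
    have "card X = Suc (Suc (card X'))" using cU' cU2 by simp
    then show ?thesis by simp
  qed
  finally show ?case using insert.hyps unfolding A_def by simp
qed


theorem proposition2p1:
  fixes n :: nat and \<alpha> :: "nat list"
  assumes "n \<ge> 1" and "is_comp n \<alpha>"
  shows "real (card (V n \<alpha>)) =
    2 ^ (n - 1) * (3 / 4) ^ card {i \<in> {1..length \<alpha> - 1}. \<alpha> ! (i - 1) > 1}"
proof -
  define S where "S = comp_set \<alpha>"
  have Sb: "S \<subseteq> {1..n-1}" unfolding S_def using comp_set_bound[OF assms(2)] .
  have Veq: "V n \<alpha> = {g. is_comp n g \<and> Q S (comp_set g)}"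
  proof (rule set_eqI)
    fix g
    show "g \<in> V n \<alpha> \<longleftrightarrow> g \<in> {g. is_comp n g \<and> Q S (comp_set g)}"
      unfolding V_def U_def mem_Collect_eq S_def[symmetric]
      using unimodal_G[OF _ Sb, of g] G_Q[of S "comp_set g"] by blast
  qed
  define W where "W = {T. T \<subseteq> {1..n-1} \<and> Q S T}"
  have bij: "bij_betw comp_set (V n \<alpha>) W"
    unfolding bij_betw_def
  proof
    show "inj_on comp_set (V n \<alpha>)" unfolding Veq by (rule inj_onI) (auto intro: comp_set_inj)
    show "comp_set ` V n \<alpha> = W"
    proof
      show "comp_set ` V n \<alpha> \<subseteq> W" unfolding Veq W_def using comp_set_bound by auto
      show "W \<subseteq> comp_set ` V n \<alpha>"
      proof
        fix T assume "T \<in> W"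
        then have T: "T \<subseteq> {1..n-1}" "Q S T" unfolding W_def by auto
        obtain g where "is_comp n g" "comp_set g = T" using comp_set_surj[OF assms(1) T(1)] by blast
        then show "T \<in> comp_set ` V n \<alpha>" unfolding Veq using T by auto
      qed
    qed
  qed
  have cVW: "card (V n \<alpha>) = card W" using bij_betw_same_card[OF bij] .
  define X where "X = {1..n-1}"
  define P where "P = Pset S"
  have Weq: "W = {T. T \<subseteq> X \<and> (\<forall>x\<in>P. x \<in> T \<or> x - 1 \<in> T)}"
    unfolding W_def X_def P_def Pset_def Q_def by auto
  have finS: "finite S" using Sb by (rule finite_subset) simp
  have finP: "finite P" unfolding P_def Pset_def using finS by simp
  have Pc: "\<forall>x\<in>P. 1 \<le> x \<and> x \<in> X \<and> x - 1 \<in> X \<and> x - 1 \<notin> P"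
  proof
    fix x assume x: "x \<in> P"
    then have "x \<in> S" "2 \<le> x" "x - 1 \<notin> S" unfolding P_def Pset_def by auto
    moreover have "x \<le> n - 1" using \<open>x \<in> S\<close> Sb by auto
    ultimately show "1 \<le> x \<and> x \<in> X \<and> x - 1 \<in> X \<and> x - 1 \<notin> P" unfolding X_def P_def Pset_def by auto
  qed
  have cnt: "card W * 4 ^ card P = 2 ^ card X * 3 ^ card P"
    unfolding Weq using count_pairs[OF finP _ Pc] X_def by simp
  have cU: "card X = n - 1" unfolding X_def by simp
  have cP: "card P = card {i \<in> {1..length \<alpha> - 1}. \<alpha> ! (i - 1) > 1}"
    unfolding P_def S_def using card_Pset[OF assms(2)] unfolding Iset_def .
  have "real (card W) * 4 ^ card P = 2 ^ (n - 1) * 3 ^ card P"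
    using arg_cong[OF cnt, of real] cU by simp
  then have "real (card W) = 2 ^ (n - 1) * 3 ^ card P / 4 ^ card P"
    by (simp add: field_simps)
  also have "\<dots> = 2 ^ (n - 1) * (3 / 4) ^ card P" by (simp add: power_divide)
  finally show ?thesis using cVW cP by simp
qed

end
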